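(* Let $d\ge 1$ and let $J$ be a positive semi-definite $d^2\times d^2$ complex matrix. Write $d\cdot J$ in block form with $d\times d$ blocks, $d\cdot J=[M^{ij}]_{i,j=1}^d$, and let $D^i=M^{ii}$ ($i=1,\dots,d$) be its diagonal blocks. Then $$\frac{1}{d}\sum_{i=1}^d\boldsymbol{\lambda}(D^i)\succ\boldsymbol{\lambda}(J),$$ where each vector $\boldsymbol{\lambda}(D^i)\in\mathbb{R}^d$ is padded with $d(d-1)$ zeros to have length $d^2$.
   Context: For a Hermitian matrix $X$, $\boldsymbol{\lambda}(X)$ denotes the vector of eigenvalues of $X$ arranged in non-increasing order. For real vectors $x,y$ of the same length $n$, $x\succ y$ ($x$ majorizes $y$) means $\sum_{i=1}^k x_i^\downarrow\ge\sum_{i=1}^k y_i^\downarrow$ for all $k\in\{1,\dots,n\}$, where $x^\downarrow$ is the rearrangement of $x$ in non-increasing order. *)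

theory Defs
  imports "Jordan_Normal_Form.Schur_Decomposition" "Jordan_Normal_Form.Char_Poly"
begin

definition psd_mat :: "complex mat \<Rightarrow> bool" where
  "psd_mat A \<longleftrightarrow> A \<in> carrier_mat (dim_row A) (dim_row A) \<and> mat_adjoint A = A \<and>
     (\<forall>v \<in> carrier_vec (dim_row A). 0 \<le> Re (conjugate v \<bullet> (A *\<^sub>v v)))"

definition eigvals :: "complex mat \<Rightarrow> real list" where
  "eigvals A = (THE xs. sorted_wrt (\<ge>) xs \<and>
      char_poly A = (\<Prod>x\<leftarrow>xs. [:- complex_of_real x, 1:]))"

definition majorizes :: "real list \<Rightarrow> real list \<Rightarrow> bool" where
  "majorizes x y \<longleftrightarrow> length x = length y \<and>
     (\<forall>k \<in> {1..length x}. sum_list (take k (rev (sort y))) \<le> sum_list (take k (rev (sort x))))"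

definition diag_block :: "nat \<Rightarrow> 'a mat \<Rightarrow> nat \<Rightarrow> 'a mat" where
  "diag_block d A i = mat d d (\<lambda>(r, c). A $$ (i * d + r, i * d + c))"

end

theory Submission
  imports Defs
begin


lemma cinner_sum: "dim_vec (y::complex vec) = n \<Longrightarrow> x \<bullet>c y = (\<Sum>i<n. x$i * cnj (y$i))"
  unfolding scalar_prod_def by (auto simp: atLeast0LessThan intro!: sum.cong)

lemma mult_vec_sum: "A \<in> carrier_mat n k \<Longrightarrow> i < n \<Longrightarrow> dim_vec x = k \<Longrightarrow>
   (A *\<^sub>v x) $ i = (\<Sum>j<k. A $$ (i,j) * x$j)"
proof -
  assume A: "A \<in> carrier_mat n k" and i: "i < n" and x: "dim_vec x = k"
  have "(A *\<^sub>v x) $ i = row A i \<bullet> x" using A i by simp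
  also have "\<dots> = (\<Sum>j\<in>{0..<k}. row A i $ j * x $ j)" unfolding scalar_prod_def using x by simp
  also have "\<dots> = (\<Sum>j<k. A $$ (i,j) * x$j)" using A i by (auto simp: atLeast0LessThan intro!: sum.cong)
  finally show ?thesis .
qed

lemma row_sprod: "A \<in> carrier_mat n k \<Longrightarrow> i < n \<Longrightarrow> dim_vec x = k \<Longrightarrow>
   row A i \<bullet> x = (\<Sum>j<k. A $$ (i,j) * x$j)"
  using mult_vec_sum[of A n k i x] by simp

lemma adj_dims[simp]: "dim_row (mat_adjoint A) = dim_col A" "dim_col (mat_adjoint A) = dim_row A"
  unfolding mat_adjoint_def by simp_all

lemma adj_carrier: "A \<in> carrier_mat n k \<Longrightarrow> mat_adjoint A \<in> carrier_mat k n"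
  unfolding carrier_mat_def by simp

lemma adj_index[simp]: "i < dim_col A \<Longrightarrow> j < dim_row A \<Longrightarrow> mat_adjoint (A::complex mat) $$ (i,j) = cnj (A $$ (j,i))"
  unfolding mat_adjoint_def mat_of_rows_def by simp

lemma herm_index: "(A::complex mat) \<in> carrier_mat n n \<Longrightarrow> mat_adjoint A = A \<Longrightarrow> i < n \<Longrightarrow> j < n \<Longrightarrow>
   A $$ (i,j) = cnj (A $$ (j,i))"
proof -
  assume A: "A \<in> carrier_mat n n" and h: "mat_adjoint A = A" and i: "i < n" and j: "j < n"
  have "mat_adjoint A $$ (i,j) = cnj (A $$ (j,i))" using A i j by simp
  thus ?thesis using h by simp
qed

lemma cinner_conj: "dim_vec (x::complex vec) = n \<Longrightarrow> dim_vec y = n \<Longrightarrow> cnj (x \<bullet>c y) = y \<bullet>c x"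
proof -
  assume x: "dim_vec (x::complex vec) = n" and y: "dim_vec y = n"
  show ?thesis unfolding cinner_sum[OF x] cinner_sum[OF y]
    by (simp add: mult.commute)
qed


lemma adj_move: assumes M: "M \<in> carrier_mat n k" and x: "dim_vec (x::complex vec) = k" and y: "dim_vec y = n"
  shows "(M *\<^sub>v x) \<bullet>c y = x \<bullet>c (mat_adjoint M *\<^sub>v y)"
proof -
  have MA: "mat_adjoint M \<in> carrier_mat k n" using M by (rule adj_carrier)
  have "(M *\<^sub>v x) \<bullet>c y = (\<Sum>i<n. (M *\<^sub>v x) $ i * cnj (y$i))"
    by (rule cinner_sum[OF y])
  also have "\<dots> = (\<Sum>i<n. (\<Sum>j<k. M $$ (i,j) * x$j) * cnj (y$i))"
    by (rule sum.cong, simp, subst mult_vec_sum[OF M _ x], auto)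
  also have "\<dots> = (\<Sum>i<n. \<Sum>j<k. x$j * (cnj (cnj (M $$ (i,j)) * y$i)))"
    by (rule sum.cong, simp, subst sum_distrib_right, rule sum.cong, simp, simp)
  also have "\<dots> = (\<Sum>j<k. \<Sum>i<n. x$j * (cnj (cnj (M $$ (i,j)) * y$i)))"
    by (rule sum.swap)
  also have "\<dots> = (\<Sum>j<k. x$j * cnj (\<Sum>i<n. cnj (M $$ (i,j)) * y$i))"
    by (simp add: sum_distrib_left)
  also have "\<dots> = (\<Sum>j<k. x$j * cnj ((mat_adjoint M *\<^sub>v y) $ j))"
    by (rule sum.cong, simp, subst mult_vec_sum[OF MA _ y], insert M, auto intro!: sum.cong)
  also have "\<dots> = x \<bullet>c (mat_adjoint M *\<^sub>v y)"
    by (rule cinner_sum[symmetric], insert M, simp)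
  finally show ?thesis .
qed

lemma cinner_smult: "dim_vec (x::complex vec) = n \<Longrightarrow> dim_vec y = n \<Longrightarrow> (a \<cdot>\<^sub>v x) \<bullet>c (b \<cdot>\<^sub>v y) = a * cnj b * (x \<bullet>c y)"
proof -
  assume x: "dim_vec (x::complex vec) = n" and y: "dim_vec y = n"
  have "(a \<cdot>\<^sub>v x) \<bullet>c (b \<cdot>\<^sub>v y) = (\<Sum>i<n. (a * x$i) * cnj (b * y$i))"
    using x y by (subst cinner_sum[of _ n], auto intro!: sum.cong)
  also have "\<dots> = (\<Sum>i<n. (a * cnj b) * (x$i * cnj (y$i)))"
    by (rule sum.cong, auto simp: mult_ac)
  also have "\<dots> = a * cnj b * (x \<bullet>c y)"
    by (simp only: cinner_sum[OF y] sum_distrib_left)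
  finally show ?thesis .
qed

lemma cinner_smult_right: "dim_vec (x::complex vec) = n \<Longrightarrow> dim_vec y = n \<Longrightarrow> x \<bullet>c (b \<cdot>\<^sub>v y) = cnj b * (x \<bullet>c y)"
  using cinner_smult[of x n y 1 b] by (simp add: smult_one)

lemma cinner_smult_left: "dim_vec (x::complex vec) = n \<Longrightarrow> dim_vec y = n \<Longrightarrow> (a \<cdot>\<^sub>v x) \<bullet>c y = a * (x \<bullet>c y)"
  using cinner_smult[of x n y a 1] by (simp add: smult_one)

lemma herm_move: "A \<in> carrier_mat n n \<Longrightarrow> mat_adjoint A = A \<Longrightarrow> dim_vec (x::complex vec) = n \<Longrightarrow> dim_vec y = n \<Longrightarrow>
  (A *\<^sub>v x) \<bullet>c y = x \<bullet>c (A *\<^sub>v y)"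
  using adj_move[of A n n x y] by simp

lemma mult_unit_col: "(W::complex mat) \<in> carrier_mat n k \<Longrightarrow> j < k \<Longrightarrow> W *\<^sub>v unit_vec k j = col W j"
  by (intro eq_vecI, auto)

definition orthonormal :: "nat \<Rightarrow> complex vec list \<Rightarrow> bool" where
  "orthonormal n ws \<longleftrightarrow> length ws = n \<and> (\<forall>i<n. ws!i \<in> carrier_vec n) \<and>
     (\<forall>i<n. \<forall>j<n. ws!i \<bullet>c ws!j = (if i = j then 1 else 0))"

lemma unitary_cols: assumes on: "orthonormal n ws"
  defines "W \<equiv> mat_of_cols n ws"
  shows "mat_adjoint W * W = 1\<^sub>m n" "W * mat_adjoint W = 1\<^sub>m n"
proof -
  have len: "length ws = n" and car: "\<And>i. i<n \<Longrightarrow> ws!i \<in> carrier_vec n"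
    and orth: "\<And>i j. i<n \<Longrightarrow> j<n \<Longrightarrow> ws!i \<bullet>c ws!j = (if i = j then 1 else 0)"
    using on unfolding orthonormal_def by auto
  have W: "W \<in> carrier_mat n n" unfolding W_def using len by (metis mat_of_cols_carrier(1))
  have WA: "mat_adjoint W \<in> carrier_mat n n" using W by (rule adj_carrier)
  have cw: "col W j = ws ! j" if "j < n" for j unfolding W_def using that len car by simp
  show 1: "mat_adjoint W * W = 1\<^sub>m n"
  proof (rule eq_matI)
    fix i j assume i: "i < dim_row (1\<^sub>m n)" and j: "j < dim_col (1\<^sub>m n)"
    hence i: "i < n" and j: "j < n" by auto
    have "(mat_adjoint W * W) $$ (i,j) = row (mat_adjoint W) i \<bullet> col W j"
      using W WA i j by simp
    also have "\<dots> = (\<Sum>k<n. mat_adjoint W $$ (i,k) * col W j $ k)"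
      by (rule row_sprod[OF WA i], insert W, simp)
    also have "\<dots> = (\<Sum>k<n. ws!j $ k * cnj (ws!i $ k))"
      by (rule sum.cong, simp, insert W i j len car, simp add: cw W_def mat_of_cols_index)
    also have "\<dots> = ws!j \<bullet>c ws!i" using car[OF i] by (simp add: cinner_sum)
    also have "\<dots> = 1\<^sub>m n $$ (i,j)" using orth[OF j i] i j by simp
    finally show "(mat_adjoint W * W) $$ (i,j) = 1\<^sub>m n $$ (i,j)" .
  qed (insert W, auto)
  show "W * mat_adjoint W = 1\<^sub>m n"
    by (rule mat_mult_left_right_inverse[OF WA W 1])
qed

lemma isometry: assumes "mat_adjoint W * W = 1\<^sub>m n" "W \<in> carrier_mat n n"
  "dim_vec (x::complex vec) = n" "dim_vec y = n"
  shows "(W *\<^sub>v x) \<bullet>c (W *\<^sub>v y) = x \<bullet>c y"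
proof -
  have "(W *\<^sub>v x) \<bullet>c (W *\<^sub>v y) = x \<bullet>c (mat_adjoint W *\<^sub>v (W *\<^sub>v y))"
    by (rule adj_move, insert assms, auto)
  also have "mat_adjoint W *\<^sub>v (W *\<^sub>v y) = (mat_adjoint W * W) *\<^sub>v y"
    by (rule assoc_mult_mat_vec[symmetric], rule adj_carrier, rule assms(2), rule assms(2), rule carrier_vecI, rule assms(4))
  also have "\<dots> = y" using assms(1) one_mult_mat_vec[OF carrier_vecI[OF assms(4)]] by simp
  finally show ?thesis .
qed

lemma adj_mult_index: "(W::complex mat) \<in> carrier_mat n k \<Longrightarrow> i < k \<Longrightarrow> dim_vec z = n \<Longrightarrow>
   (mat_adjoint W *\<^sub>v z) $ i = z \<bullet>c col W i"
proof -
  assume W: "W \<in> carrier_mat n k" and i: "i < k" and z: "dim_vec z = n"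
  have WA: "mat_adjoint W \<in> carrier_mat k n" using W by (rule adj_carrier)
  have "(mat_adjoint W *\<^sub>v z) $ i = (\<Sum>p<n. mat_adjoint W $$ (i,p) * z$p)"
    by (rule mult_vec_sum[OF WA i z])
  also have "\<dots> = (\<Sum>p<n. z$p * cnj (col W i $ p))"
    by (rule sum.cong, simp, insert W i, simp)
  also have "\<dots> = z \<bullet>c col W i" by (rule cinner_sum[symmetric], insert W, simp)
  finally show ?thesis .
qed

lemma cinner_self_pos: assumes "(w::complex vec) \<in> carrier_vec n" "w \<bullet>c w \<noteq> 0"
  shows "w \<bullet>c w = complex_of_real (Re (w \<bullet>c w))" "Re (w \<bullet>c w) > 0"
proof -
  have "w \<bullet>c w \<ge> 0" by (rule conjugate_square_ge_0_vec)
  hence "Im (w \<bullet>c w) = 0" "Re (w \<bullet>c w) \<ge> 0" by (auto simp: less_eq_complex_def)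
  thus "w \<bullet>c w = complex_of_real (Re (w \<bullet>c w))" by (simp add: complex_eq_iff)
  with \<open>Re (w \<bullet>c w) \<ge> 0\<close> assms(2) show "Re (w \<bullet>c w) > 0"
    by (metis less_eq_real_def of_real_0)
qed

lemma first_vec_basis:
  fixes v :: "complex vec"
  assumes v: "v \<in> carrier_vec n" and v0: "v \<noteq> 0\<^sub>v n" and n: "n > 0"
  shows "\<exists>ws. orthonormal n ws \<and> (\<exists>c. ws ! 0 = c \<cdot>\<^sub>v v)"
proof -
  define b where "b = basis_completion v"
  interpret cof_vec_space n "TYPE(complex)" .
  from basis_completion[OF v v0, folded b_def]
  have b: "set b \<subseteq> carrier_vec n" "distinct b" "\<not> lin_dep (set b)" "length b = n" "hd b = v" by blast+
  then obtain vs where bv: "b = v # vs" using n by (cases b, auto)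
  define ws0 where "ws0 = gram_schmidt n b"
  from gram_schmidt_result[OF b(1,2,3) ws0_def] b(4)
  have ws0: "corthogonal ws0" "set ws0 \<subseteq> carrier_vec n" "length ws0 = n" by simp_all
  have "hd ws0 = v" unfolding ws0_def bv by (rule gram_schmidt_hd[OF v])
  hence hd0: "ws0 ! 0 = v" using ws0(3) n by (metis hd_conv_nth list.size(3) less_not_refl)
  define nf where "nf w = complex_of_real (1 / sqrt (Re (w \<bullet>c w)))" for w
  define ws where "ws = map (\<lambda>w. nf w \<cdot>\<^sub>v w) ws0"
  have car0: "ws0 ! i \<in> carrier_vec n" if "i < n" for i using ws0 that by auto
  have nz: "ws0 ! i \<bullet>c ws0 ! i \<noteq> 0" if "i < n" for i using corthogonalD[OF ws0(1), of i i] that ws0(3) by auto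
  have on: "orthonormal n ws" unfolding orthonormal_def
  proof (intro conjI allI impI)
    show "length ws = n" using ws0 by (simp add: ws_def)
    fix i assume i: "i < n"
    show "ws ! i \<in> carrier_vec n" using car0[OF i] i ws0(3) by (simp add: ws_def)
    fix j assume j: "j < n"
    have wi: "ws!i = nf (ws0!i) \<cdot>\<^sub>v ws0!i" using i ws0(3) by (simp add: ws_def)
    have wj: "ws!j = nf (ws0!j) \<cdot>\<^sub>v ws0!j" using j ws0(3) by (simp add: ws_def)
    have "ws ! i \<bullet>c ws ! j = nf (ws0!i) * cnj (nf (ws0!j)) * (ws0 ! i \<bullet>c ws0 ! j)"
      unfolding wi wj by (rule cinner_smult[of _ n], insert car0[OF i] car0[OF j], auto)
    also have "\<dots> = (if i = j then 1 else 0)"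
    proof (cases "i = j")
      case False thus ?thesis using corthogonalD[OF ws0(1), of i j] i j ws0(3) by auto
    next
      case True
      obtain r where eq: "ws0 ! i \<bullet>c ws0 ! i = complex_of_real r" and pos: "r > 0"
        using cinner_self_pos[OF car0[OF i] nz[OF i]] by blast
      have "nf (ws0!i) * cnj (nf (ws0!i)) * (ws0 ! i \<bullet>c ws0 ! i) = complex_of_real ((1 / sqrt r) * (1 / sqrt r) * r)"
      proof -
        have nfi: "nf (ws0!i) = complex_of_real (1 / sqrt r)" by (simp add: nf_def eq)
        show ?thesis unfolding nfi eq by (simp only: complex_cnj_complex_of_real of_real_mult)
      qed
      also have "(1 / sqrt r) * (1 / sqrt r) * r = 1"
      proof -
        have s: "sqrt r * sqrt r = r" using pos by simp
        have "sqrt r > 0" using pos by simp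
        thus ?thesis using s by (simp add: field_simps)
      qed
      finally show ?thesis using True by simp
    qed
    finally show "ws ! i \<bullet>c ws ! j = (if i = j then 1 else 0)" .
  qed
  moreover have "ws ! 0 = nf v \<cdot>\<^sub>v v" using hd0 n ws0(3) by (simp add: ws_def)
  ultimately show ?thesis by blast
qed

definition liftv :: "nat \<Rightarrow> complex vec \<Rightarrow> complex vec" where
  "liftv n z = vec n (\<lambda>i. if i = 0 then 0 else z $ (i - 1))"

lemma liftv_dim[simp]: "dim_vec (liftv n z) = n" unfolding liftv_def by simp

lemma liftv_cinner: assumes "dim_vec z = m" "dim_vec z' = m"
  shows "liftv (Suc m) z \<bullet>c liftv (Suc m) z' = z \<bullet>c z'"
proof -
  have "liftv (Suc m) z \<bullet>c liftv (Suc m) z' = (\<Sum>i<Suc m. liftv (Suc m) z $ i * cnj (liftv (Suc m) z' $ i))"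
    by (rule cinner_sum, simp)
  also have "\<dots> = (\<Sum>i<m. z $ i * cnj (z' $ i))"
    by (subst sum.lessThan_Suc_shift, simp add: liftv_def)
  also have "\<dots> = z \<bullet>c z'" by (rule cinner_sum[symmetric], rule assms(2))
  finally show ?thesis .
qed

lemma liftv_unit: "liftv (Suc m) z \<bullet>c unit_vec (Suc m) 0 = 0" "unit_vec (Suc m) 0 \<bullet>c liftv (Suc m) z = 0"
proof -
  have "liftv (Suc m) z \<bullet>c unit_vec (Suc m) 0 = (\<Sum>i<Suc m. liftv (Suc m) z $ i * cnj (unit_vec (Suc m) 0 $ i))"
    by (rule cinner_sum, simp)
  also have "\<dots> = 0" by (subst sum.lessThan_Suc_shift, simp add: liftv_def)
  finally show "liftv (Suc m) z \<bullet>c unit_vec (Suc m) 0 = 0" .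
  have "unit_vec (Suc m) 0 \<bullet>c liftv (Suc m) z = (\<Sum>i<Suc m. unit_vec (Suc m) 0 $ i * cnj (liftv (Suc m) z $ i))"
    by (rule cinner_sum, simp)
  also have "\<dots> = 0" by (subst sum.lessThan_Suc_shift, simp add: liftv_def)
  finally show "unit_vec (Suc m) 0 \<bullet>c liftv (Suc m) z = 0" .
qed

lemma unit_cinner: "unit_vec (Suc m) 0 \<bullet>c unit_vec (Suc m) 0 = (1::complex)"
proof -
  have "unit_vec (Suc m) 0 \<bullet>c unit_vec (Suc m) 0 = (\<Sum>i<Suc m. unit_vec (Suc m) 0 $ i * cnj (unit_vec (Suc m) 0 $ i) :: complex)"
    by (rule cinner_sum, simp)
  also have "\<dots> = 1" by (subst sum.lessThan_Suc_shift, simp)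
  finally show ?thesis .
qed

lemma spectral_ex:
  fixes A :: "complex mat"
  assumes "A \<in> carrier_mat n n" "mat_adjoint A = A"
  shows "\<exists>ws \<mu>s. orthonormal n ws \<and> length \<mu>s = n \<and>
     (\<forall>i<n. A *\<^sub>v ws!i = complex_of_real (\<mu>s!i) \<cdot>\<^sub>v ws!i)"
  using assms
proof (induction n arbitrary: A)
  case 0
  show ?case by (rule exI[of _ "[]"], rule exI[of _ "[]"], simp add: orthonormal_def)
next
  case (Suc m A)
  define n where "n = Suc m"
  have A: "A \<in> carrier_mat n n" and herm: "mat_adjoint A = A" using Suc.prems n_def by auto
  obtain as where cp: "char_poly A = (\<Prod>a\<leftarrow>as. [:-a,1:])" and las: "length as = n"
    using char_poly_factorized[OF A] by blast
  then obtain e as' where as: "as = e # as'" by (cases as, auto simp: n_def)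
  have "poly (char_poly A) e = 0" by (simp add: cp as)
  hence ev: "eigenvalue A e" using eigenvalue_root_char_poly[OF A] by simp
  define v where "v = find_eigenvector A e"
  have "eigenvector A v e" unfolding v_def by (rule find_eigenvector[OF A ev])
  hence v: "v \<in> carrier_vec n" and v0: "v \<noteq> 0\<^sub>v n" and Av: "A *\<^sub>v v = e \<cdot>\<^sub>v v"
    using A unfolding eigenvector_def by auto
  obtain ws c where on: "orthonormal n ws" and w0: "ws ! 0 = c \<cdot>\<^sub>v v"
    using first_vec_basis[OF v v0] n_def by blast
  have len: "length ws = n" and car: "\<And>i. i<n \<Longrightarrow> ws!i \<in> carrier_vec n"
    and orth: "\<And>i j. i<n \<Longrightarrow> j<n \<Longrightarrow> ws!i \<bullet>c ws!j = (if i = j then 1 else 0)"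
    using on unfolding orthonormal_def by auto
  have n0: "0 < n" by (simp add: n_def)
  have Aw0: "A *\<^sub>v ws!0 = e \<cdot>\<^sub>v ws!0"
    unfolding w0 using A v Av by (simp add: mult_mat_vec smult_smult_assoc mult.commute)
  have "e = e * (ws!0 \<bullet>c ws!0)" using orth[OF n0 n0] by simp
  also have "\<dots> = (A *\<^sub>v ws!0) \<bullet>c ws!0" unfolding Aw0 by (rule cinner_smult_left[symmetric], insert car[OF n0], auto)
  also have "\<dots> = ws!0 \<bullet>c (A *\<^sub>v ws!0)" by (rule herm_move[OF A herm], insert car[OF n0], auto)
  also have "\<dots> = cnj e * (ws!0 \<bullet>c ws!0)" unfolding Aw0 by (rule cinner_smult_right, insert car[OF n0], auto)
  also have "\<dots> = cnj e" using orth[OF n0 n0] by simp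
  finally have "e = cnj e" .
  hence "Im e = Im (cnj e)" by (rule arg_cong)
  hence "Im e = 0" by simp
  hence ereal: "e = complex_of_real (Re e)" by (simp add: complex_eq_iff)
  define W where "W = mat_of_cols n ws"
  have W: "W \<in> carrier_mat n n" unfolding W_def using len by (metis mat_of_cols_carrier(1))
  have WA: "mat_adjoint W \<in> carrier_mat n n" using W by (rule adj_carrier)
  have uni: "mat_adjoint W * W = 1\<^sub>m n" "W * mat_adjoint W = 1\<^sub>m n" using unitary_cols[OF on] W_def by auto
  have cw: "col W j = ws ! j" if "j < n" for j unfolding W_def using that len car by simp
  define A' where "A' = mat_adjoint W * A * W"
  have A': "A' \<in> carrier_mat n n" unfolding A'_def using WA A W by auto
  have AWc: "A * W \<in> carrier_mat n n" using A W by simp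
  have WA': "W * A' = A * W"
  proof -
    have AW': "A * W \<in> carrier_mat n n" using A W by simp
    have "W * A' = W * (mat_adjoint W * (A * W))" unfolding A'_def by (simp only: assoc_mult_mat[OF WA A W])
    also have "\<dots> = (W * mat_adjoint W) * (A * W)" by (rule assoc_mult_mat[OF W WA AW', symmetric])
    also have "\<dots> = A * W" unfolding uni by (rule left_mult_one_mat[OF AW'])
    finally show ?thesis .
  qed
  have A'v: "A' *\<^sub>v y = mat_adjoint W *\<^sub>v (A *\<^sub>v (W *\<^sub>v y))" if "y \<in> carrier_vec n" for y
  proof -
    have c1: "mat_adjoint W * A \<in> carrier_mat n n" using WA A by simp
    have c2: "W *\<^sub>v y \<in> carrier_vec n" using W that by simp
    have "A' *\<^sub>v y = (mat_adjoint W * A) *\<^sub>v (W *\<^sub>v y)" unfolding A'_def by (rule assoc_mult_mat_vec[OF c1 W that])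
    also have "\<dots> = mat_adjoint W *\<^sub>v (A *\<^sub>v (W *\<^sub>v y))" by (rule assoc_mult_mat_vec[OF WA A c2])
    finally show ?thesis .
  qed
  have AW: "A *\<^sub>v (W *\<^sub>v y) = W *\<^sub>v (A' *\<^sub>v y)" if "y \<in> carrier_vec n" for y
  proof -
    have "A *\<^sub>v (W *\<^sub>v y) = (A * W) *\<^sub>v y" using A W that by simp
    also have "\<dots> = (W * A') *\<^sub>v y" unfolding WA' ..
    also have "\<dots> = W *\<^sub>v (A' *\<^sub>v y)" using A' W that by simp
    finally show ?thesis .
  qed
  have A'idx: "A' $$ (i,k) = (A *\<^sub>v ws!k) \<bullet>c ws!i" if "i < n" "k < n" for i k
  proof -
    have "A' $$ (i,k) = (A' *\<^sub>v unit_vec n k) $ i" using mult_unit_col[OF A' that(2)] A' that by simp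
    also have "\<dots> = (mat_adjoint W *\<^sub>v (A *\<^sub>v ws!k)) $ i"
      unfolding A'v[OF unit_vec_carrier] mult_unit_col[OF W that(2)] cw[OF that(2)] ..
    also have "\<dots> = (A *\<^sub>v ws!k) \<bullet>c ws!i"
      using adj_mult_index[OF W that(1), of "A *\<^sub>v ws!k"] A cw[OF that(1)] by simp
    finally show ?thesis .
  qed
  have A'0: "A' $$ (0, Suc k) = 0" if "Suc k < n" for k
  proof -
    have "A' $$ (0, Suc k) = (A *\<^sub>v ws!Suc k) \<bullet>c ws!0" by (rule A'idx[OF n0 that])
    also have "\<dots> = ws!Suc k \<bullet>c (A *\<^sub>v ws!0)" by (rule herm_move[OF A herm], insert car[OF n0] car[OF that], auto)
    also have "\<dots> = cnj e * (ws!Suc k \<bullet>c ws!0)" unfolding Aw0 by (rule cinner_smult_right, insert car[OF n0] car[OF that], auto)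
    also have "\<dots> = 0" using orth[OF that n0] by simp
    finally show ?thesis .
  qed
  define B where "B = mat m m (\<lambda>(i,j). A' $$ (Suc i, Suc j))"
  have B: "B \<in> carrier_mat m m" unfolding B_def by simp
  have hermB: "mat_adjoint B = B"
  proof (rule eq_matI)
    fix i j assume i: "i < dim_row B" and j: "j < dim_col B"
    hence i: "i < m" and j: "j < m" using B by auto
    have ci: "ws!Suc i \<in> carrier_vec n" and cj: "ws!Suc j \<in> carrier_vec n" using car i j by (auto simp: n_def)
    have "mat_adjoint B $$ (i,j) = cnj (B $$ (j,i))" using B i j by simp
    also have "\<dots> = cnj ((A *\<^sub>v ws!Suc i) \<bullet>c ws!Suc j)" using i j A'idx[of "Suc j" "Suc i"] by (simp add: B_def n_def)
    also have "\<dots> = ws!Suc j \<bullet>c (A *\<^sub>v ws!Suc i)" by (rule cinner_conj, insert A ci cj, auto)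
    also have "\<dots> = (A *\<^sub>v ws!Suc j) \<bullet>c ws!Suc i" by (rule herm_move[symmetric, OF A herm], insert ci cj, auto)
    also have "\<dots> = B $$ (i,j)" using i j A'idx[of "Suc i" "Suc j"] by (simp add: B_def n_def)
    finally show "mat_adjoint B $$ (i,j) = B $$ (i,j)" .
  qed (insert B, auto)
  obtain zs ls where onz: "orthonormal m zs" and lenl: "length ls = m"
    and eigz: "\<forall>i<m. B *\<^sub>v zs!i = complex_of_real (ls!i) \<cdot>\<^sub>v zs!i"
    using Suc.IH[OF B hermB] by blast
  have lenz: "length zs = m" and carz: "\<And>i. i<m \<Longrightarrow> zs!i \<in> carrier_vec m"
    and orthz: "\<And>i j. i<m \<Longrightarrow> j<m \<Longrightarrow> zs!i \<bullet>c zs!j = (if i = j then 1 else 0)"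
    using onz unfolding orthonormal_def by auto
  define ys where "ys = unit_vec n 0 # map (liftv n) zs"
  define \<mu>s where "\<mu>s = Re e # ls"
  have leny: "length ys = n" by (simp add: ys_def lenz n_def)
  have cary: "ys ! i \<in> carrier_vec n" if "i < n" for i
    using that by (cases i, auto simp: ys_def lenz n_def carrier_vecI)
  have orthy: "ys!i \<bullet>c ys!j = (if i = j then 1 else 0)" if "i < n" "j < n" for i j
  proof (cases i)
    case 0
    thus ?thesis
    proof (cases j)
      case 0 thus ?thesis using \<open>i = 0\<close> unit_cinner[of m] by (simp add: ys_def n_def)
    next
      case (Suc j') thus ?thesis using \<open>i = 0\<close> that liftv_unit(2)[of m] by (simp add: ys_def n_def lenz)
    qed
  next
    case (Suc i')
    thus ?thesis
    proof (cases j)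
      case 0 thus ?thesis using \<open>i = Suc i'\<close> that liftv_unit(1)[of m] by (simp add: ys_def n_def lenz)
    next
      case (Suc j')
      have i': "i' < m" and j': "j' < m" using that \<open>i = Suc i'\<close> Suc by (auto simp: n_def)
      have "ys!i \<bullet>c ys!j = liftv (Suc m) (zs!i') \<bullet>c liftv (Suc m) (zs!j')"
        using \<open>i = Suc i'\<close> Suc i' j' by (simp add: ys_def n_def lenz)
      also have "\<dots> = zs!i' \<bullet>c zs!j'" by (rule liftv_cinner, insert carz i' j', auto)
      finally show ?thesis using orthz[OF i' j'] \<open>i = Suc i'\<close> Suc by simp
    qed
  qed
  have eigy: "A' *\<^sub>v ys!i = complex_of_real (\<mu>s!i) \<cdot>\<^sub>v ys!i" if "i < n" for i
  proof (cases i)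
    case 0
    show ?thesis
    proof (rule eq_vecI)
      show "dim_vec (A' *\<^sub>v ys!i) = dim_vec (complex_of_real (\<mu>s!i) \<cdot>\<^sub>v ys!i)"
        using A' 0 by (simp add: ys_def)
      fix k assume "k < dim_vec (complex_of_real (\<mu>s!i) \<cdot>\<^sub>v ys!i)"
      hence k: "k < n" using 0 by (simp add: ys_def)
      have "(A' *\<^sub>v ys!i) $ k = col A' 0 $ k" using 0 mult_unit_col[OF A' n0] by (simp add: ys_def)
      also have "\<dots> = A' $$ (k,0)" using A' k by simp
      also have "\<dots> = (e \<cdot>\<^sub>v ws!0) \<bullet>c ws!k" using A'idx[OF k n0] Aw0 by simp
      also have "\<dots> = e * (ws!0 \<bullet>c ws!k)" by (rule cinner_smult_left, insert car[OF n0] car[OF k], auto)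
      also have "\<dots> = (complex_of_real (\<mu>s!i) \<cdot>\<^sub>v ys!i) $ k"
        using orth[OF n0 k] k 0 ereal by (simp add: ys_def \<mu>s_def)
      finally show "(A' *\<^sub>v ys!i) $ k = (complex_of_real (\<mu>s!i) \<cdot>\<^sub>v ys!i) $ k" .
    qed
  next
    case (Suc i')
    have i': "i' < m" using that Suc by (simp add: n_def)
    define z where "z = zs ! i'"
    have z: "z \<in> carrier_vec m" using carz[OF i'] by (simp add: z_def)
    have yi: "ys ! i = liftv n z" using Suc i' by (simp add: ys_def z_def lenz)
    have mi: "\<mu>s ! i = ls ! i'" using Suc by (simp add: \<mu>s_def)
    have Bz: "B *\<^sub>v z = complex_of_real (ls!i') \<cdot>\<^sub>v z" using eigz i' by (simp add: z_def)
    show ?thesis unfolding yi mi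
    proof (rule eq_vecI)
      show "dim_vec (A' *\<^sub>v liftv n z) = dim_vec (complex_of_real (ls!i') \<cdot>\<^sub>v liftv n z)"
        using A' by simp
      fix k assume "k < dim_vec (complex_of_real (ls!i') \<cdot>\<^sub>v liftv n z)"
      hence k: "k < n" by simp
      have "(A' *\<^sub>v liftv n z) $ k = (\<Sum>q<Suc m. A' $$ (k,q) * liftv n z $ q)"
        using mult_vec_sum[OF A' k, of "liftv n z"] by (simp add: n_def)
      also have "\<dots> = (\<Sum>q<m. A' $$ (k,Suc q) * z $ q)"
        by (subst sum.lessThan_Suc_shift, simp add: liftv_def n_def)
      also have "\<dots> = (complex_of_real (ls!i') \<cdot>\<^sub>v liftv n z) $ k"
      proof (cases k)
        case 0
        have "(\<Sum>q<m. A' $$ (k,Suc q) * z $ q) = 0"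
          by (rule sum.neutral, insert 0 A'0, auto simp: n_def)
        thus ?thesis using 0 by (simp add: liftv_def n_def)
      next
        case (Suc k')
        have k': "k' < m" using k Suc by (simp add: n_def)
        have "(\<Sum>q<m. A' $$ (k,Suc q) * z $ q) = (\<Sum>q<m. B $$ (k',q) * z $ q)"
          by (rule sum.cong, simp, insert Suc k', simp add: B_def)
        also have "\<dots> = (B *\<^sub>v z) $ k'" using mult_vec_sum[OF B k', of z] z by simp
        also have "\<dots> = complex_of_real (ls!i') * z $ k'" unfolding Bz using k' z by simp
        finally show ?thesis using Suc k' by (simp add: liftv_def n_def)
      qed
      finally show "(A' *\<^sub>v liftv n z) $ k = (complex_of_real (ls!i') \<cdot>\<^sub>v liftv n z) $ k" .
    qed
  qed
  define ws' where "ws' = map (\<lambda>y. W *\<^sub>v y) ys"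
  have "orthonormal n ws'" unfolding orthonormal_def
  proof (intro conjI allI impI)
    show "length ws' = n" by (simp add: ws'_def leny)
    fix i assume i: "i < n"
    show "ws' ! i \<in> carrier_vec n" using W i leny by (simp add: ws'_def carrier_vecI)
    fix j assume j: "j < n"
    have "ws' ! i \<bullet>c ws' ! j = ys!i \<bullet>c ys!j"
      unfolding ws'_def using i j leny by (simp add: isometry[OF uni(1) W] cary)
    thus "ws' ! i \<bullet>c ws' ! j = (if i = j then 1 else 0)" using orthy[OF i j] by simp
  qed
  moreover have "length \<mu>s = n" by (simp add: \<mu>s_def lenl n_def)
  moreover have "\<forall>i<n. A *\<^sub>v ws'!i = complex_of_real (\<mu>s!i) \<cdot>\<^sub>v ws'!i"
  proof (intro allI impI)
    fix i assume i: "i < n"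
    have "A *\<^sub>v ws'!i = W *\<^sub>v (A' *\<^sub>v ys!i)" using i leny AW[OF cary[OF i]] by (simp add: ws'_def)
    also have "\<dots> = complex_of_real (\<mu>s!i) \<cdot>\<^sub>v ws'!i"
      unfolding eigy[OF i] using i leny W cary[OF i] by (simp add: ws'_def mult_mat_vec)
    finally show "A *\<^sub>v ws'!i = complex_of_real (\<mu>s!i) \<cdot>\<^sub>v ws'!i" .
  qed
  ultimately show ?case unfolding n_def by blast
qed

lemma char_poly_eigbasis:
  fixes A :: "complex mat"
  assumes A: "A \<in> carrier_mat n n" and on: "orthonormal n ws" and lm: "length \<mu>s = n"
    and eig: "\<forall>i<n. A *\<^sub>v ws!i = complex_of_real (\<mu>s!i) \<cdot>\<^sub>v ws!i"
  shows "char_poly A = (\<Prod>x\<leftarrow>\<mu>s. [:- complex_of_real x, 1:])"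
proof -
  have len: "length ws = n" and car: "\<And>i. i<n \<Longrightarrow> ws!i \<in> carrier_vec n"
    using on unfolding orthonormal_def by auto
  define W where "W = mat_of_cols n ws"
  have W: "W \<in> carrier_mat n n" unfolding W_def using len by (metis mat_of_cols_carrier(1))
  have WA: "mat_adjoint W \<in> carrier_mat n n" using W by (rule adj_carrier)
  have uni: "mat_adjoint W * W = 1\<^sub>m n" "W * mat_adjoint W = 1\<^sub>m n" using unitary_cols[OF on] W_def by auto
  have cw: "col W j = ws ! j" if "j < n" for j unfolding W_def using that len car by simp
  define L where "L = mat n n (\<lambda>(i,j). if i = j then complex_of_real (\<mu>s!i) else 0)"
  have L: "L \<in> carrier_mat n n" unfolding L_def by simp
  have AW: "A * W = W * L"
  proof (rule eq_matI)
    fix i j assume "i < dim_row (W * L)" "j < dim_col (W * L)"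
    hence i: "i < n" and j: "j < n" using W L by auto
    have "(A * W) $$ (i,j) = (A *\<^sub>v col W j) $ i" using A W i j by simp
    also have "\<dots> = complex_of_real (\<mu>s!j) * ws!j $ i" using eig j i car[OF j] by (simp add: cw[OF j])
    also have "\<dots> = (\<Sum>k<n. W $$ (i,k) * L $$ (k,j))"
    proof -
      have "(\<Sum>k<n. W $$ (i,k) * L $$ (k,j)) = (\<Sum>k<n. if k = j then W $$ (i,j) * complex_of_real (\<mu>s!j) else 0)"
        by (rule sum.cong, simp, insert j, simp add: L_def)
      also have "\<dots> = W $$ (i,j) * complex_of_real (\<mu>s!j)" using j by simp
      finally show ?thesis using i j len by (simp add: W_def mat_of_cols_index)
    qed
    also have "\<dots> = (W * L) $$ (i,j)" using W L i j by (simp add: row_sprod)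
    finally show "(A * W) $$ (i,j) = (W * L) $$ (i,j)" .
  qed (insert A W L, auto)
  have "A = A * (W * mat_adjoint W)" unfolding uni using A by simp
  also have "\<dots> = (A * W) * mat_adjoint W" by (rule assoc_mult_mat[OF A W WA, symmetric])
  also have "\<dots> = W * L * mat_adjoint W" unfolding AW ..
  finally have "A = W * L * mat_adjoint W" .
  hence "similar_mat A L" by (intro similar_matI[of _ _ W "mat_adjoint W" n], insert A L W WA uni, auto)
  hence "char_poly A = char_poly L" by (rule char_poly_similar)
  also have "\<dots> = (\<Prod>a\<leftarrow>diag_mat L. [:- a, 1:])"
    by (rule char_poly_upper_triangular[OF L], auto simp: upper_triangular_def L_def)
  also have "diag_mat L = map complex_of_real \<mu>s" unfolding diag_mat_def L_def
    by (rule nth_equalityI, auto simp: lm)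
  finally show ?thesis by (simp add: comp_def)
qed

lemma prod_list_remove1: "x \<in> set ys \<Longrightarrow> prod_list (map f ys) = f x * prod_list (map f (remove1 x ys))"
  for f :: "'a \<Rightarrow> 'b::comm_monoid_mult"
  by (induction ys, auto simp: mult_ac)

lemma lin_prod_mset:
  "(\<Prod>x\<leftarrow>xs. [:- x, 1:]) = (\<Prod>y\<leftarrow>ys. [:- y, 1::complex:]) \<Longrightarrow> mset xs = mset ys"
proof (induction xs arbitrary: ys)
  case Nil
  hence "degree (\<Prod>y\<leftarrow>ys. [:- y, 1::complex:]) = 0" by simp
  hence "length ys = 0" by (simp add: degree_linear_factors)
  thus ?case by simp
next
  case (Cons x xs ys)
  have "poly (\<Prod>y\<leftarrow>ys. [:- y, 1::complex:]) x = 0" unfolding Cons.prems[symmetric] by simp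
  hence "x \<in> set ys" by (auto simp: poly_prod_list prod_list_zero_iff)
  hence "(\<Prod>y\<leftarrow>ys. [:- y, 1::complex:]) = [:- x, 1:] * (\<Prod>y\<leftarrow>remove1 x ys. [:- y, 1::complex:])"
    by (rule prod_list_remove1)
  with Cons.prems have "[:- x, 1:] * (\<Prod>y\<leftarrow>xs. [:- y, 1::complex:]) = [:- x, 1:] * (\<Prod>y\<leftarrow>remove1 x ys. [:- y, 1::complex:])"
    by simp
  hence "(\<Prod>y\<leftarrow>xs. [:- y, 1::complex:]) = (\<Prod>y\<leftarrow>remove1 x ys. [:- y, 1::complex:])"
    by (subst (asm) mult_left_cancel, auto)
  from Cons.IH[OF this] \<open>x \<in> set ys\<close> show ?case by simp
qed

lemma sorted_desc_unique:
  fixes xs ys :: "real list"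
  assumes "sorted_wrt (\<ge>) xs" "sorted_wrt (\<ge>) ys" "mset xs = mset ys"
  shows "xs = ys"
proof -
  have "sorted (rev xs)" "sorted (rev ys)" using assms by (simp_all add: sorted_wrt_rev)
  hence "sort (rev ys) = rev xs" "sort (rev ys) = rev ys"
    using assms(3) by (auto intro!: properties_for_sort)
  thus ?thesis by simp
qed

lemma eigvals_eigbasis:
  fixes A :: "complex mat"
  assumes A: "A \<in> carrier_mat n n" and on: "orthonormal n ws" and lm: "length \<mu>s = n"
    and eig: "\<forall>i<n. A *\<^sub>v ws!i = complex_of_real (\<mu>s!i) \<cdot>\<^sub>v ws!i" and so: "sorted_wrt (\<ge>) \<mu>s"
  shows "eigvals A = \<mu>s"
  unfolding eigvals_def
proof (rule the_equality)
  have cp: "char_poly A = (\<Prod>x\<leftarrow>\<mu>s. [:- complex_of_real x, 1:])"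
    by (rule char_poly_eigbasis[OF A on lm eig])
  show "sorted_wrt (\<ge>) \<mu>s \<and> char_poly A = (\<Prod>x\<leftarrow>\<mu>s. [:- complex_of_real x, 1:])" using so cp by simp
  fix xs assume h: "sorted_wrt (\<ge>) xs \<and> char_poly A = (\<Prod>x\<leftarrow>xs. [:- complex_of_real x, 1:])"
  have "(\<Prod>x\<leftarrow>map complex_of_real xs. [:- x, 1:]) = (\<Prod>y\<leftarrow>map complex_of_real \<mu>s. [:- y, 1::complex:])"
    using h cp by (simp add: comp_def)
  hence "mset (map complex_of_real xs) = mset (map complex_of_real \<mu>s)" by (rule lin_prod_mset)
  hence "image_mset Re (mset (map complex_of_real xs)) = image_mset Re (mset (map complex_of_real \<mu>s))" by simp
  hence "mset xs = mset \<mu>s" by (simp add: multiset.map_comp comp_def)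
  thus "xs = \<mu>s" using h so sorted_desc_unique by blast
qed

lemma spectral_sorted:
  fixes A :: "complex mat"
  assumes A: "A \<in> carrier_mat n n" and herm: "mat_adjoint A = A"
  shows "\<exists>ws. orthonormal n ws \<and> length (eigvals A) = n \<and>
     (\<forall>i<n. A *\<^sub>v ws!i = complex_of_real (eigvals A!i) \<cdot>\<^sub>v ws!i) \<and> sorted_wrt (\<ge>) (eigvals A)"
proof -
  obtain ws \<mu>s where on: "orthonormal n ws" and lm: "length \<mu>s = n"
    and eig: "\<forall>i<n. A *\<^sub>v ws!i = complex_of_real (\<mu>s!i) \<cdot>\<^sub>v ws!i"
    using spectral_ex[OF A herm] by blast
  have len: "length ws = n" and car: "\<And>i. i<n \<Longrightarrow> ws!i \<in> carrier_vec n"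
    and orth: "\<And>i j. i<n \<Longrightarrow> j<n \<Longrightarrow> ws!i \<bullet>c ws!j = (if i = j then 1 else 0)"
    using on unfolding orthonormal_def by auto
  define ids where "ids = sort_key (\<lambda>i. - \<mu>s!i) [0..<n]"
  have mis: "mset ids = mset [0..<n]" by (simp add: ids_def)
  have dis: "distinct ids" by (simp add: ids_def)
  have lis: "length ids = n" using mis by (metis length_upt minus_nat.diff_0 size_mset)
  have sis: "set ids = {..<n}" using mis by (metis atLeast_upt set_mset_mset)
  have isn: "ids ! a < n" if "a < n" for a using sis lis that by (metis lessThan_iff nth_mem)
  define ws' where "ws' = map (\<lambda>i. ws!i) ids"
  define \<mu>s' where "\<mu>s' = map (\<lambda>i. \<mu>s!i) ids"
  have on': "orthonormal n ws'" unfolding orthonormal_def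
  proof (intro conjI allI impI)
    show "length ws' = n" by (simp add: ws'_def lis)
    fix i assume i: "i < n"
    show "ws' ! i \<in> carrier_vec n" using car[OF isn[OF i]] i lis by (simp add: ws'_def)
    fix j assume j: "j < n"
    show "ws' ! i \<bullet>c ws' ! j = (if i = j then 1 else 0)"
      using orth[OF isn[OF i] isn[OF j]] i j lis nth_eq_iff_index_eq[OF dis, of i j] by (simp add: ws'_def)
  qed
  have lm': "length \<mu>s' = n" by (simp add: \<mu>s'_def lis)
  have eig': "\<forall>i<n. A *\<^sub>v ws'!i = complex_of_real (\<mu>s'!i) \<cdot>\<^sub>v ws'!i"
    using eig isn lis by (simp add: ws'_def \<mu>s'_def)
  have "sorted (map (\<lambda>i. - \<mu>s!i) ids)" unfolding ids_def by (rule sorted_sort_key)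
  hence so: "sorted_wrt (\<ge>) \<mu>s'" by (simp add: \<mu>s'_def sorted_wrt_map)
  have "eigvals A = \<mu>s'" by (rule eigvals_eigbasis[OF A on' lm' eig' so])
  thus ?thesis using on' lm' eig' so by auto
qed

lemma zcnj: "z * cnj z = complex_of_real ((cmod z)\<^sup>2)" "cnj z * z = complex_of_real ((cmod z)\<^sup>2)"
  using complex_norm_square[of z] by (simp_all add: mult.commute)

lemma nu_eq:
  fixes \<beta> :: "nat \<Rightarrow> nat \<Rightarrow> complex" and \<nu> :: "nat \<Rightarrow> real"
  assumes orth: "\<forall>a<d. \<forall>b<d. (\<Sum>m<N. \<beta> a m * cnj (\<beta> b m)) = (if a = b then complex_of_real (\<nu> a) else 0)"
    and a: "a < d"
  shows "\<nu> a = (\<Sum>m<N. (cmod (\<beta> a m))\<^sup>2)"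
proof -
  have "complex_of_real (\<nu> a) = (\<Sum>m<N. \<beta> a m * cnj (\<beta> a m))" using orth a by simp
  also have "\<dots> = complex_of_real (\<Sum>m<N. (cmod (\<beta> a m))\<^sup>2)"
    by (simp only: zcnj of_real_sum)
  finally show ?thesis by (simp only: of_real_eq_iff)
qed

lemma col_bound:
  fixes \<beta> :: "nat \<Rightarrow> nat \<Rightarrow> complex" and \<nu> :: "nat \<Rightarrow> real"
  assumes orth: "\<forall>a<d. \<forall>b<d. (\<Sum>m<N. \<beta> a m * cnj (\<beta> b m)) = (if a = b then complex_of_real (\<nu> a) else 0)"
    and m: "m < N"
  shows "(\<Sum>a<d. (cmod (\<beta> a m))\<^sup>2 / \<nu> a) \<le> 1"
proof -
  define V where "V a = complex_of_real (\<nu> a)" for a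
  define u where "u a = cnj (\<beta> a m) / V a" for a
  define t where "t n = (\<Sum>a<d. u a * \<beta> a n)" for n
  define p where "p = (\<Sum>a<d. (cmod (\<beta> a m))\<^sup>2 / \<nu> a)"
  have p0: "p \<ge> 0" unfolding p_def
    by (rule sum_nonneg, insert nu_eq[OF orth], simp add: sum_nonneg)
  have trm: "u a * cnj (u a) * V a = complex_of_real ((cmod (\<beta> a m))\<^sup>2 / \<nu> a)" for a
  proof -
    have "u a * cnj (u a) * V a = (cnj (\<beta> a m) * \<beta> a m) * (V a / (V a * V a))"
      by (simp add: u_def V_def)
    also have "V a / (V a * V a) = complex_of_real (1 / \<nu> a)" by (simp add: V_def)
    also have "cnj (\<beta> a m) * \<beta> a m = complex_of_real ((cmod (\<beta> a m))\<^sup>2)"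
      by (rule zcnj(2))
    finally show ?thesis by (simp only: of_real_mult[symmetric], simp)
  qed
  have tt: "t n * cnj (t n) = (\<Sum>a<d. \<Sum>b<d. u a * cnj (u b) * (\<beta> a n * cnj (\<beta> b n)))" for n
    unfolding t_def by (simp add: sum_product cnj_sum mult_ac)
  have "(\<Sum>n<N. t n * cnj (t n)) = (\<Sum>a<d. \<Sum>b<d. u a * cnj (u b) * (\<Sum>n<N. \<beta> a n * cnj (\<beta> b n)))"
  proof -
    have "(\<Sum>n<N. t n * cnj (t n)) = (\<Sum>n<N. \<Sum>a<d. \<Sum>b<d. u a * cnj (u b) * (\<beta> a n * cnj (\<beta> b n)))"
      by (simp add: tt)
    also have "\<dots> = (\<Sum>a<d. \<Sum>n<N. \<Sum>b<d. u a * cnj (u b) * (\<beta> a n * cnj (\<beta> b n)))"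
      by (rule sum.swap)
    also have "\<dots> = (\<Sum>a<d. \<Sum>b<d. \<Sum>n<N. u a * cnj (u b) * (\<beta> a n * cnj (\<beta> b n)))"
      by (rule sum.cong, simp, rule sum.swap)
    also have "\<dots> = (\<Sum>a<d. \<Sum>b<d. u a * cnj (u b) * (\<Sum>n<N. \<beta> a n * cnj (\<beta> b n)))"
      by (simp add: sum_distrib_left)
    finally show ?thesis .
  qed
  also have "\<dots> = (\<Sum>a<d. \<Sum>b<d. if b = a then u a * cnj (u a) * V a else 0)"
    by (rule sum.cong, simp, rule sum.cong, simp, insert orth, auto simp: V_def)
  also have "\<dots> = (\<Sum>a<d. u a * cnj (u a) * V a)" by simp
  also have "\<dots> = complex_of_real p" unfolding trm p_def by simp
  finally have sumt: "(\<Sum>n<N. t n * cnj (t n)) = complex_of_real p" .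
  have "complex_of_real (\<Sum>n<N. (cmod (t n))\<^sup>2) = (\<Sum>n<N. t n * cnj (t n))"
    by (simp only: zcnj of_real_sum)
  hence sumr: "(\<Sum>n<N. (cmod (t n))\<^sup>2) = p" unfolding sumt by (simp only: of_real_eq_iff)
  have "t m = (\<Sum>a<d. u a * cnj (u a) * V a)"
    unfolding t_def by (rule sum.cong, simp, simp add: u_def V_def)
  also have "\<dots> = complex_of_real p" unfolding trm p_def by simp
  finally have tm: "t m = complex_of_real p" .
  have "(cmod (t m))\<^sup>2 \<le> (\<Sum>n<N. (cmod (t n))\<^sup>2)"
    by (rule member_le_sum, insert m, auto)
  hence "p * p \<le> p" unfolding sumr tm using p0 by (simp add: power2_eq_square)
  hence "p \<le> 1" using p0 by (cases "p = 0", auto)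
  thus ?thesis unfolding p_def .
qed

lemma sum_split_at: "k \<le> d \<Longrightarrow> (\<Sum>a<d. f a) = (\<Sum>a<k. f a) + (\<Sum>a\<in>{k..<d}. f a)"
  for f :: "nat \<Rightarrow> real"
  by (metis atLeast0LessThan le0 sum.atLeastLessThan_concat)

lemma rearr:
  fixes \<nu> c :: "nat \<Rightarrow> real"
  assumes anti: "\<forall>a b. a \<le> b \<longrightarrow> b < d \<longrightarrow> \<nu> b \<le> \<nu> a" and nn: "\<forall>a<d. 0 \<le> \<nu> a"
    and c: "\<forall>a<d. 0 \<le> c a \<and> c a \<le> 1" and sc: "(\<Sum>a<d. c a) \<le> real k"
  shows "(\<Sum>a<d. \<nu> a * c a) \<le> (\<Sum>a<min k d. \<nu> a)"
proof (cases "d \<le> k")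
  case True
  have "(\<Sum>a<d. \<nu> a * c a) \<le> (\<Sum>a<d. \<nu> a)"
    by (rule sum_mono, insert nn c, simp add: mult_left_le)
  thus ?thesis using True by simp
next
  case False
  hence kd: "k < d" by simp
  define t where "t = \<nu> k"
  have t0: "t \<ge> 0" using nn kd by (simp add: t_def)
  have A1: "(\<Sum>a<k. t * (1 - c a)) \<le> (\<Sum>a<k. \<nu> a * (1 - c a))"
    by (rule sum_mono, rule mult_right_mono, insert anti c kd, auto simp: t_def)
  have A2: "(\<Sum>a\<in>{k..<d}. \<nu> a * c a) \<le> (\<Sum>a\<in>{k..<d}. t * c a)"
    by (rule sum_mono, rule mult_right_mono, insert anti c kd, auto simp: t_def)
  have s1: "(\<Sum>a<k. t * (1 - c a)) = t * real k - t * (\<Sum>a<k. c a)"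
    by (simp add: sum_subtractf sum_distrib_left[symmetric] right_diff_distrib)
  have s2: "(\<Sum>a\<in>{k..<d}. t * c a) = t * (\<Sum>a\<in>{k..<d}. c a)" by (simp add: sum_distrib_left)
  have s3: "(\<Sum>a<k. \<nu> a * (1 - c a)) = (\<Sum>a<k. \<nu> a) - (\<Sum>a<k. \<nu> a * c a)"
    by (simp add: sum_subtractf right_diff_distrib)
  have sp1: "(\<Sum>a<d. \<nu> a * c a) = (\<Sum>a<k. \<nu> a * c a) + (\<Sum>a\<in>{k..<d}. \<nu> a * c a)"
    by (rule sum_split_at, insert kd, simp)
  have sp2: "(\<Sum>a<d. c a) = (\<Sum>a<k. c a) + (\<Sum>a\<in>{k..<d}. c a)"
    by (rule sum_split_at, insert kd, simp)
  have "t * (\<Sum>a<d. c a) \<le> t * real k" by (rule mult_left_mono[OF sc t0])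
  hence "(\<Sum>a<d. \<nu> a * c a) \<le> (\<Sum>a<k. \<nu> a)"
    using A1 A2 s1 s2 s3 sp1 sp2 by (simp add: distrib_left)
  thus ?thesis using kd by simp
qed

lemma beta_bound:
  fixes \<beta> :: "nat \<Rightarrow> nat \<Rightarrow> complex" and \<nu> :: "nat \<Rightarrow> real"
  assumes orth: "\<forall>a<d. \<forall>b<d. (\<Sum>m<N. \<beta> a m * cnj (\<beta> b m)) = (if a = b then complex_of_real (\<nu> a) else 0)"
    and anti: "\<forall>a b. a \<le> b \<longrightarrow> b < d \<longrightarrow> \<nu> b \<le> \<nu> a"
    and S: "S \<subseteq> {..<N}"
  shows "(\<Sum>m\<in>S. \<Sum>a<d. (cmod (\<beta> a m))\<^sup>2) \<le> (\<Sum>a<min (card S) d. \<nu> a)"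
proof -
  have fin: "finite S" using S finite_subset by blast
  have nueq: "\<nu> a = (\<Sum>m<N. (cmod (\<beta> a m))\<^sup>2)" if "a < d" for a by (rule nu_eq[OF orth that])
  have nn: "\<forall>a<d. 0 \<le> \<nu> a" using nueq by (simp add: sum_nonneg)
  define r where "r a = (\<Sum>m\<in>S. (cmod (\<beta> a m))\<^sup>2)" for a
  have r0: "0 \<le> r a" for a unfolding r_def by (simp add: sum_nonneg)
  have rle: "r a \<le> \<nu> a" if "a < d" for a
    unfolding nueq[OF that] r_def by (rule sum_mono2, insert S, auto)
  define c where "c a = r a / \<nu> a" for a
  have cb: "\<forall>a<d. 0 \<le> c a \<and> c a \<le> 1"
  proof (intro allI impI conjI)
    fix a assume a: "a < d"
    show "0 \<le> c a" unfolding c_def using r0 nn a by simp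
    show "c a \<le> 1"
    proof (cases "\<nu> a = 0")
      case True thus ?thesis by (simp add: c_def)
    next
      case False
      hence "\<nu> a > 0" using nn a by force
      thus ?thesis using rle[OF a] by (simp add: c_def)
    qed
  qed
  have nc: "\<nu> a * c a = r a" if "a < d" for a
  proof (cases "\<nu> a = 0")
    case True thus ?thesis using r0[of a] rle[OF that] by (simp add: c_def)
  next
    case False thus ?thesis by (simp add: c_def)
  qed
  have "(\<Sum>a<d. c a) = (\<Sum>a<d. \<Sum>m\<in>S. (cmod (\<beta> a m))\<^sup>2 / \<nu> a)"
    unfolding c_def r_def by (simp add: sum_divide_distrib)
  also have "\<dots> = (\<Sum>m\<in>S. \<Sum>a<d. (cmod (\<beta> a m))\<^sup>2 / \<nu> a)" by (rule sum.swap)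
  also have "\<dots> \<le> (\<Sum>m\<in>S. 1)"
    by (rule sum_mono, rule col_bound[OF orth], insert S, auto)
  also have "\<dots> = real (card S)" by simp
  finally have sc: "(\<Sum>a<d. c a) \<le> real (card S)" .
  have "(\<Sum>m\<in>S. \<Sum>a<d. (cmod (\<beta> a m))\<^sup>2) = (\<Sum>a<d. r a)" unfolding r_def by (rule sum.swap)
  also have "\<dots> = (\<Sum>a<d. \<nu> a * c a)" by (rule sum.cong, simp, simp add: nc)
  also have "\<dots> \<le> (\<Sum>a<min (card S) d. \<nu> a)" by (rule rearr[OF anti nn cb sc])
  finally show ?thesis .
qed

lemma quad_expand:
  fixes D :: "complex mat" and xs :: "nat \<Rightarrow> complex vec" and c :: "nat \<Rightarrow> complex"
  assumes D: "D \<in> carrier_mat d d"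
    and Dexp: "\<forall>r<d. \<forall>s<d. D $$ (r,s) = (\<Sum>m<N. c m * xs m $ r * cnj (xs m $ s))"
    and xd: "\<forall>m<N. dim_vec (xs m) = d" and u: "dim_vec u = d" and v: "dim_vec v = d"
  shows "(D *\<^sub>v v) \<bullet>c u = (\<Sum>m<N. c m * (xs m \<bullet>c u) * (v \<bullet>c xs m))"
proof -
  have "(D *\<^sub>v v) \<bullet>c u = (\<Sum>r<d. (D *\<^sub>v v) $ r * cnj (u $ r))" by (rule cinner_sum[OF u])
  also have "\<dots> = (\<Sum>r<d. \<Sum>s<d. \<Sum>m<N. c m * (xs m $ r * cnj (u $ r)) * (v $ s * cnj (xs m $ s)))"
  proof (rule sum.cong, simp)
    fix r assume "r \<in> {..<d}"
    hence r: "r < d" by simp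
    have "(D *\<^sub>v v) $ r = (\<Sum>s<d. D $$ (r,s) * v $ s)" by (rule mult_vec_sum[OF D r v])
    also have "\<dots> = (\<Sum>s<d. (\<Sum>m<N. c m * xs m $ r * cnj (xs m $ s)) * v $ s)"
      by (rule sum.cong, simp, insert Dexp r, simp)
    finally have "(D *\<^sub>v v) $ r * cnj (u $ r) = (\<Sum>s<d. (\<Sum>m<N. c m * xs m $ r * cnj (xs m $ s)) * v $ s) * cnj (u $ r)" by simp
    also have "\<dots> = (\<Sum>s<d. \<Sum>m<N. c m * (xs m $ r * cnj (u $ r)) * (v $ s * cnj (xs m $ s)))"
      by (simp add: sum_distrib_right sum_distrib_left mult_ac)
    finally show "(D *\<^sub>v v) $ r * cnj (u $ r) = (\<Sum>s<d. \<Sum>m<N. c m * (xs m $ r * cnj (u $ r)) * (v $ s * cnj (xs m $ s)))" .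
  qed
  also have "\<dots> = (\<Sum>r<d. \<Sum>m<N. \<Sum>s<d. c m * (xs m $ r * cnj (u $ r)) * (v $ s * cnj (xs m $ s)))"
    by (rule sum.cong, simp, rule sum.swap)
  also have "\<dots> = (\<Sum>m<N. \<Sum>r<d. \<Sum>s<d. c m * (xs m $ r * cnj (u $ r)) * (v $ s * cnj (xs m $ s)))"
    by (rule sum.swap)
  also have "\<dots> = (\<Sum>m<N. c m * (\<Sum>r<d. xs m $ r * cnj (u $ r)) * (\<Sum>s<d. v $ s * cnj (xs m $ s)))"
    by (rule sum.cong, simp, simp add: sum_distrib_left sum_distrib_right mult_ac)
  also have "\<dots> = (\<Sum>m<N. c m * (xs m \<bullet>c u) * (v \<bullet>c xs m))"
    by (rule sum.cong, simp, insert xd u, simp add: cinner_sum)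
  finally show ?thesis .
qed

lemma mat_mult_sum: "X \<in> carrier_mat a b \<Longrightarrow> Y \<in> carrier_mat b c \<Longrightarrow> p < a \<Longrightarrow> q < c \<Longrightarrow>
  (X * Y) $$ (p,q) = (\<Sum>m<b. X $$ (p,m) * Y $$ (m,q))"
proof -
  assume X: "X \<in> carrier_mat a b" and Y: "Y \<in> carrier_mat b c" and p: "p < a" and q: "q < c"
  have "(X * Y) $$ (p,q) = row X p \<bullet> col Y q" using X Y p q by simp
  also have "\<dots> = (\<Sum>m<b. X $$ (p,m) * col Y q $ m)" by (rule row_sprod[OF X p], insert Y, simp)
  also have "\<dots> = (\<Sum>m<b. X $$ (p,m) * Y $$ (m,q))" by (rule sum.cong, simp, insert Y q, simp)
  finally show ?thesis .
qed

lemma eig_expand: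
  fixes A :: "complex mat"
  assumes A: "A \<in> carrier_mat n n" and on: "orthonormal n ws" and lm: "length \<mu>s = n"
    and eig: "\<forall>i<n. A *\<^sub>v ws!i = complex_of_real (\<mu>s!i) \<cdot>\<^sub>v ws!i"
  shows "\<forall>p<n. \<forall>q<n. (\<Sum>m<n. ws!m $ p * cnj (ws!m $ q)) = (if p = q then 1 else 0)"
    "\<forall>p<n. \<forall>q<n. A $$ (p,q) = (\<Sum>m<n. complex_of_real (\<mu>s!m) * ws!m $ p * cnj (ws!m $ q))"
proof -
  have len: "length ws = n" and car: "\<And>i. i<n \<Longrightarrow> ws!i \<in> carrier_vec n"
    using on unfolding orthonormal_def by auto
  define W where "W = mat_of_cols n ws"
  have W: "W \<in> carrier_mat n n" unfolding W_def using len by (metis mat_of_cols_carrier(1))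
  have WA: "mat_adjoint W \<in> carrier_mat n n" using W by (rule adj_carrier)
  have uni: "W * mat_adjoint W = 1\<^sub>m n" using unitary_cols[OF on] W_def by auto
  have Wi: "W $$ (p,m) = ws!m $ p" if "p < n" "m < n" for p m
    using that len by (simp add: W_def mat_of_cols_index)
  have cw: "col W j = ws ! j" if "j < n" for j unfolding W_def using that len car by simp
  show "\<forall>p<n. \<forall>q<n. (\<Sum>m<n. ws!m $ p * cnj (ws!m $ q)) = (if p = q then 1 else 0)"
  proof (intro allI impI)
    fix p q assume p: "p < n" and q: "q < n"
    have "(if p = q then 1 else 0) = (W * mat_adjoint W) $$ (p,q)" unfolding uni using p q by simp
    also have "\<dots> = (\<Sum>m<n. W $$ (p,m) * mat_adjoint W $$ (m,q))"
      using W WA p q by (simp add: row_sprod)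
    also have "\<dots> = (\<Sum>m<n. ws!m $ p * cnj (ws!m $ q))"
      by (rule sum.cong, simp, insert W p q, simp add: Wi)
    finally show "(\<Sum>m<n. ws!m $ p * cnj (ws!m $ q)) = (if p = q then 1 else 0)" by simp
  qed
  show "\<forall>p<n. \<forall>q<n. A $$ (p,q) = (\<Sum>m<n. complex_of_real (\<mu>s!m) * ws!m $ p * cnj (ws!m $ q))"
  proof (intro allI impI)
    fix p q assume p: "p < n" and q: "q < n"
    have AW: "A * W \<in> carrier_mat n n" using A W by simp
    have "A = A * (W * mat_adjoint W)" unfolding uni using A by simp
    also have "\<dots> = (A * W) * mat_adjoint W" by (rule assoc_mult_mat[OF A W WA, symmetric])
    finally have "A $$ (p,q) = ((A * W) * mat_adjoint W) $$ (p,q)" by simp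
    also have "\<dots> = (\<Sum>m<n. (A * W) $$ (p,m) * mat_adjoint W $$ (m,q))"
      by (rule mat_mult_sum[OF AW WA p q])
    also have "\<dots> = (\<Sum>m<n. complex_of_real (\<mu>s!m) * ws!m $ p * cnj (ws!m $ q))"
    proof (rule sum.cong, simp)
      fix m assume "m \<in> {..<n}"
      hence m: "m < n" by simp
      have "(A * W) $$ (p,m) = (A *\<^sub>v col W m) $ p" using A W p m by simp
      also have "\<dots> = complex_of_real (\<mu>s!m) * ws!m $ p" using eig m p car[OF m] by (simp add: cw[OF m])
      finally show "(A * W) $$ (p,m) * mat_adjoint W $$ (m,q) = complex_of_real (\<mu>s!m) * ws!m $ p * cnj (ws!m $ q)"
        using W m q by (simp add: Wi)
    qed
    finally show "A $$ (p,q) = (\<Sum>m<n. complex_of_real (\<mu>s!m) * ws!m $ p * cnj (ws!m $ q))" .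
  qed
qed

lemma parseval:
  assumes on: "orthonormal d es" and x: "dim_vec (x::complex vec) = d"
  shows "(\<Sum>a<d. (cmod (x \<bullet>c es!a))\<^sup>2) = (\<Sum>r<d. (cmod (x $ r))\<^sup>2)"
proof -
  have len: "length es = d" and car: "\<And>i. i<d \<Longrightarrow> es!i \<in> carrier_vec d"
    using on unfolding orthonormal_def by auto
  have compl: "\<forall>p<d. \<forall>q<d. (\<Sum>m<d. es!m $ p * cnj (es!m $ q)) = (if p = q then 1 else 0)"
  proof -
    have "\<forall>i<d. 1\<^sub>m d *\<^sub>v es!i = complex_of_real (replicate d 1 ! i) \<cdot>\<^sub>v es!i"
      using car by simp
    thus ?thesis using eig_expand(1)[OF _ on, of "1\<^sub>m d" "replicate d 1"] by simp
  qed
  have Dexp: "\<forall>r<d. \<forall>s<d. 1\<^sub>m d $$ (r,s) = (\<Sum>m<d. 1 * es!m $ r * cnj (es!m $ s))" using compl by simp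
  have xd: "\<forall>m<d. dim_vec (es!m) = d" using car by simp
  have "(1\<^sub>m d *\<^sub>v x) \<bullet>c x = (\<Sum>m<d. 1 * (es!m \<bullet>c x) * (x \<bullet>c es!m))"
    by (rule quad_expand[where d=d and N=d and c="\<lambda>_. 1" and xs="\<lambda>m. es!m"], simp, rule Dexp, rule xd, rule x, rule x)
  also have "\<dots> = (\<Sum>m<d. complex_of_real ((cmod (x \<bullet>c es!m))\<^sup>2))"
  proof (rule sum.cong, simp)
    fix m assume "m \<in> {..<d}"
    hence m: "m < d" by simp
    have "es!m \<bullet>c x = cnj (x \<bullet>c es!m)" by (rule cinner_conj[symmetric, of x d], rule x, insert xd m, simp)
    thus "1 * (es!m \<bullet>c x) * (x \<bullet>c es!m) = complex_of_real ((cmod (x \<bullet>c es!m))\<^sup>2)"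
      by (simp only: zcnj mult_1)
  qed
  finally have h: "(1\<^sub>m d *\<^sub>v x) \<bullet>c x = (\<Sum>m<d. complex_of_real ((cmod (x \<bullet>c es!m))\<^sup>2))" .
  have one: "1\<^sub>m d *\<^sub>v x = x" by (rule one_mult_mat_vec, rule carrier_vecI[OF x])
  have "x \<bullet>c x = complex_of_real (\<Sum>m<d. (cmod (x \<bullet>c es!m))\<^sup>2)"
    using h unfolding one of_real_sum .
  moreover have "x \<bullet>c x = complex_of_real (\<Sum>r<d. (cmod (x $ r))\<^sup>2)"
    unfolding cinner_sum[OF x] of_real_sum by (simp only: zcnj)
  ultimately show ?thesis by (simp only: of_real_eq_iff)
qed

lemma sum_blocks: "(\<Sum>i<a. \<Sum>r<b. f (i*b + r)) = (\<Sum>p<a*b. f p)"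
  for f :: "nat \<Rightarrow> 'a::comm_monoid_add"
proof (induction a)
  case 0 thus ?case by simp
next
  case (Suc a)
  have "(\<Sum>p<Suc a * b. f p) = (\<Sum>p\<in>{0..<a*b}. f p) + (\<Sum>p\<in>{a*b..<a*b+b}. f p)"
    by (simp add: atLeast0LessThan[symmetric] sum.atLeastLessThan_concat add.commute)
  also have "(\<Sum>p\<in>{a*b..<a*b+b}. f p) = (\<Sum>r\<in>{0..<b}. f (a*b + r))"
    using sum.shift_bounds_nat_ivl[of f 0 "a*b" b] by (simp add: add.commute)
  finally show ?case using Suc by (simp add: atLeast0LessThan)
qed

lemma blk_bound: "i < d \<Longrightarrow> r < (d::nat) \<Longrightarrow> i*d + r < d*d"
proof -
  assume i: "i < d" and r: "r < d"
  have "i*d + r < i*d + d" using r by simp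
  also have "\<dots> = Suc i * d" by simp
  also have "\<dots> \<le> d * d" using i by (intro mult_le_mono1, simp)
  finally show ?thesis .
qed

lemma rev_sort_id: "sorted_wrt (\<ge>) (xs::real list) \<Longrightarrow> rev (sort xs) = xs"
proof -
  assume "sorted_wrt (\<ge>) xs"
  hence "sorted (rev xs)" by (simp add: sorted_wrt_rev)
  hence "sort xs = rev xs" by (intro properties_for_sort, simp_all)
  thus ?thesis by simp
qed

lemma sum_list_take: "k \<le> length xs \<Longrightarrow> sum_list (take k xs) = (\<Sum>i<k. xs!i)"
  for xs :: "real list"
  by (simp add: sum_list_sum_nth atLeast0LessThan min_def)

lemma block_bound:
  fixes J Di :: "complex mat" and ws es :: "complex vec list" and mu nu :: "real list"
  assumes onJ: "orthonormal (d*d) ws" and lm: "length mu = d*d"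
    and expJ: "\<forall>p<d*d. \<forall>q<d*d. J $$ (p,q) = (\<Sum>m<d*d. complex_of_real (mu!m) * ws!m $ p * cnj (ws!m $ q))"
    and mnn: "\<forall>m<d*d. 0 \<le> mu!m"
    and i: "i < d"
    and Dc: "Di \<in> carrier_mat d d"
    and Didx: "\<forall>r<d. \<forall>s<d. Di $$ (r,s) = of_nat d * J $$ (i*d+r, i*d+s)"
    and onE: "orthonormal d es" and lnu: "length nu = d"
    and eigE: "\<forall>a<d. Di *\<^sub>v es!a = complex_of_real (nu!a) \<cdot>\<^sub>v es!a"
    and snu: "sorted_wrt (\<ge>) nu"
  shows "k \<le> d*d \<Longrightarrow> (\<Sum>m<k. real d * mu!m * (\<Sum>r<d. (cmod (ws!m $ (i*d+r)))\<^sup>2)) \<le> (\<Sum>a<min k d. nu!a)"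
    and "\<forall>a<d. 0 \<le> nu!a"
proof -
  have lenw: "length ws = d*d" and carw: "\<And>m. m<d*d \<Longrightarrow> ws!m \<in> carrier_vec (d*d)"
    using onJ unfolding orthonormal_def by auto
  have lene: "length es = d" and care: "\<And>a. a<d \<Longrightarrow> es!a \<in> carrier_vec d"
    and orthe: "\<And>a b. a<d \<Longrightarrow> b<d \<Longrightarrow> es!a \<bullet>c es!b = (if a = b then 1 else 0)"
    using onE unfolding orthonormal_def by auto
  define x where "x m = vec d (\<lambda>r. ws!m $ (i*d+r))" for m
  have xd: "dim_vec (x m) = d" for m by (simp add: x_def)
  define c where "c m = complex_of_real (real d * mu!m)" for m
  define \<beta> where "\<beta> a m = complex_of_real (sqrt (real d * mu!m)) * (x m \<bullet>c es!a)" for a m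
  have Dexp: "\<forall>r<d. \<forall>s<d. Di $$ (r,s) = (\<Sum>m<d*d. c m * x m $ r * cnj (x m $ s))"
  proof (intro allI impI)
    fix r s assume r: "r < d" and s: "s < d"
    have "Di $$ (r,s) = of_nat d * J $$ (i*d+r, i*d+s)" using Didx r s by simp
    also have "\<dots> = of_nat d * (\<Sum>m<d*d. complex_of_real (mu!m) * ws!m $ (i*d+r) * cnj (ws!m $ (i*d+s)))"
      using expJ blk_bound[OF i r] blk_bound[OF i s] by simp
    also have "\<dots> = (\<Sum>m<d*d. c m * x m $ r * cnj (x m $ s))"
      by (simp add: sum_distrib_left c_def x_def r s mult_ac)
    finally show "Di $$ (r,s) = (\<Sum>m<d*d. c m * x m $ r * cnj (x m $ s))" .
  qed
  have orth: "\<forall>a<d. \<forall>b<d. (\<Sum>m<d*d. \<beta> a m * cnj (\<beta> b m)) = (if a = b then complex_of_real (nu!a) else 0)"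
  proof (intro allI impI)
    fix a b assume a: "a < d" and b: "b < d"
    have "(\<Sum>m<d*d. \<beta> a m * cnj (\<beta> b m)) = (\<Sum>m<d*d. c m * (x m \<bullet>c es!a) * (es!b \<bullet>c x m))"
    proof (rule sum.cong, simp)
      fix m assume "m \<in> {..<d*d}"
      hence m: "m < d*d" by simp
      have sq: "sqrt (real d * mu!m) * sqrt (real d * mu!m) = real d * mu!m"
        using mnn m by simp
      have cj: "cnj (x m \<bullet>c es!b) = es!b \<bullet>c x m" by (rule cinner_conj[of _ d], rule xd, insert care[OF b], simp)
      have "\<beta> a m * cnj (\<beta> b m) = complex_of_real (sqrt (real d * mu!m) * sqrt (real d * mu!m)) * (x m \<bullet>c es!a) * cnj (x m \<bullet>c es!b)"
        by (simp only: \<beta>_def complex_cnj_mult complex_cnj_complex_of_real of_real_mult mult_ac)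
      also have "\<dots> = c m * (x m \<bullet>c es!a) * (es!b \<bullet>c x m)" unfolding sq cj c_def ..
      finally show "\<beta> a m * cnj (\<beta> b m) = c m * (x m \<bullet>c es!a) * (es!b \<bullet>c x m)" .
    qed
    also have "\<dots> = (Di *\<^sub>v es!b) \<bullet>c es!a"
      by (rule quad_expand[OF Dc Dexp, symmetric], insert xd care a b, auto)
    also have "\<dots> = complex_of_real (nu!b) * (es!b \<bullet>c es!a)"
      unfolding eigE[rule_format, OF b] by (rule cinner_smult_left, insert care[OF a] care[OF b], auto)
    also have "\<dots> = (if a = b then complex_of_real (nu!a) else 0)" using orthe[OF b a] by auto
    finally show "(\<Sum>m<d*d. \<beta> a m * cnj (\<beta> b m)) = (if a = b then complex_of_real (nu!a) else 0)" .
  qed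
  show nn: "\<forall>a<d. 0 \<le> nu!a"
    using nu_eq[OF orth] by (simp add: sum_nonneg)
  have anti: "\<forall>a b. a \<le> b \<longrightarrow> b < d \<longrightarrow> nu!b \<le> nu!a"
    using snu lnu by (auto simp: sorted_wrt_iff_nth_less le_less)
  assume k: "k \<le> d*d"
  have "(\<Sum>m\<in>{..<k}. \<Sum>a<d. (cmod (\<beta> a m))\<^sup>2) \<le> (\<Sum>a<min (card {..<k}) d. nu!a)"
    by (rule beta_bound[OF orth anti], insert k, auto)
  moreover have "(\<Sum>a<d. (cmod (\<beta> a m))\<^sup>2) = real d * mu!m * (\<Sum>r<d. (cmod (ws!m $ (i*d+r)))\<^sup>2)"
    if m: "m < d*d" for m
  proof -
    have "(\<Sum>a<d. (cmod (\<beta> a m))\<^sup>2) = (\<Sum>a<d. real d * mu!m * (cmod (x m \<bullet>c es!a))\<^sup>2)"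
      by (rule sum.cong, simp, insert mnn m, simp add: \<beta>_def norm_mult power_mult_distrib)
    also have "\<dots> = real d * mu!m * (\<Sum>a<d. (cmod (x m \<bullet>c es!a))\<^sup>2)" by (simp add: sum_distrib_left)
    also have "(\<Sum>a<d. (cmod (x m \<bullet>c es!a))\<^sup>2) = (\<Sum>r<d. (cmod (x m $ r))\<^sup>2)" by (rule parseval[OF onE xd])
    also have "\<dots> = (\<Sum>r<d. (cmod (ws!m $ (i*d+r)))\<^sup>2)" by (simp add: x_def)
    finally show ?thesis .
  qed
  ultimately show "(\<Sum>m<k. real d * mu!m * (\<Sum>r<d. (cmod (ws!m $ (i*d+r)))\<^sup>2)) \<le> (\<Sum>a<min k d. nu!a)"
    using k by simp
qed



theorem theorem1:
  fixes d :: nat and J :: "complex mat"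
  assumes "d \<ge> 1"
    and "J \<in> carrier_mat (d * d) (d * d)"
    and "psd_mat J"
  defines "D \<equiv> (\<lambda>i. diag_block d (of_nat d \<cdot>\<^sub>m J) i)"
  shows "majorizes
           (map (\<lambda>k. if k < d then (1 / real d) * (\<Sum>i<d. eigvals (D i) ! k) else 0) [0..<d * d])
           (eigvals J)"
proof -
  define n where "n = d * d"
  have d1: "d \<ge> 1" using assms(1) .
  have Jc: "J \<in> carrier_mat n n" using assms(2) by (simp add: n_def)
  have herm: "mat_adjoint J = J" and pos: "\<forall>v \<in> carrier_vec n. 0 \<le> Re (conjugate v \<bullet> (J *\<^sub>v v))"
    using assms(3) Jc unfolding psd_mat_def by auto
  obtain ws where onJ: "orthonormal n ws" and lenJ: "length (eigvals J) = n"
    and eigJ: "\<forall>i<n. J *\<^sub>v ws!i = complex_of_real (eigvals J!i) \<cdot>\<^sub>v ws!i"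
    and sortJ: "sorted_wrt (\<ge>) (eigvals J)"
    using spectral_sorted[OF Jc herm] by blast
  define mu where "mu = eigvals J"
  have lenw: "length ws = n" and carw: "\<And>m. m<n \<Longrightarrow> ws!m \<in> carrier_vec n"
    and orthw: "\<And>i j. i<n \<Longrightarrow> j<n \<Longrightarrow> ws!i \<bullet>c ws!j = (if i = j then 1 else 0)"
    using onJ unfolding orthonormal_def by auto
  have expJ: "\<forall>p<n. \<forall>q<n. J $$ (p,q) = (\<Sum>m<n. complex_of_real (mu!m) * ws!m $ p * cnj (ws!m $ q))"
    using eig_expand(2)[OF Jc onJ lenJ eigJ] by (simp add: mu_def)
  have mnn: "\<forall>m<n. 0 \<le> mu!m"
  proof (intro allI impI)
    fix m assume m: "m < n"
    have "conjugate (ws!m) \<bullet> (J *\<^sub>v ws!m) = complex_of_real (mu!m) * (conjugate (ws!m) \<bullet> ws!m)"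
      unfolding eigJ[rule_format, OF m] mu_def
      by (rule scalar_prod_smult_distrib[of _ n], insert carw[OF m], auto)
    also have "conjugate (ws!m) \<bullet> ws!m = ws!m \<bullet>c ws!m"
      by (rule conjugate_vec_sprod_comm[symmetric], insert carw[OF m], auto)
    also have "\<dots> = 1" using orthw[OF m m] by simp
    finally have "conjugate (ws!m) \<bullet> (J *\<^sub>v ws!m) = complex_of_real (mu!m)" by simp
    thus "0 \<le> mu!m" using pos carw[OF m] by force
  qed
  have Dc: "D i \<in> carrier_mat d d" for i unfolding D_def diag_block_def by simp
  have Didx: "\<forall>r<d. \<forall>s<d. D i $$ (r,s) = of_nat d * J $$ (i*d+r, i*d+s)" if i: "i < d" for i
    using blk_bound[OF i] Jc unfolding D_def diag_block_def by (simp add: n_def)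
  have hermD: "mat_adjoint (D i) = D i" if i: "i < d" for i
  proof (rule eq_matI)
    fix r s assume "r < dim_row (D i)" "s < dim_col (D i)"
    hence r: "r < d" and s: "s < d" using Dc[of i] by auto
    have "mat_adjoint (D i) $$ (r,s) = cnj (D i $$ (s,r))" using Dc[of i] r s by simp
    also have "\<dots> = of_nat d * cnj (J $$ (i*d+s, i*d+r))" using Didx[OF i] r s by simp
    also have "cnj (J $$ (i*d+s, i*d+r)) = J $$ (i*d+r, i*d+s)"
      using herm_index[OF Jc herm, of "i*d+r" "i*d+s"] blk_bound[OF i r] blk_bound[OF i s] by (simp add: n_def)
    also have "of_nat d * J $$ (i*d+r, i*d+s) = D i $$ (r,s)" using Didx[OF i] r s by simp
    finally show "mat_adjoint (D i) $$ (r,s) = D i $$ (r,s)" .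
  qed (insert Dc[of i], auto)
  have "\<forall>i\<in>{..<d}. \<exists>es. orthonormal d es \<and> length (eigvals (D i)) = d \<and>
     (\<forall>a<d. D i *\<^sub>v es!a = complex_of_real (eigvals (D i)!a) \<cdot>\<^sub>v es!a) \<and> sorted_wrt (\<ge>) (eigvals (D i))"
    using spectral_sorted[OF Dc hermD] by blast
  from bchoice[OF this] obtain E where E: "\<forall>i\<in>{..<d}. orthonormal d (E i) \<and> length (eigvals (D i)) = d \<and>
     (\<forall>a<d. D i *\<^sub>v E i!a = complex_of_real (eigvals (D i)!a) \<cdot>\<^sub>v E i!a) \<and> sorted_wrt (\<ge>) (eigvals (D i))"
    by blast
  define nu where "nu i = eigvals (D i)" for i
  have PB: "(\<Sum>m<k. real d * mu!m * (\<Sum>r<d. (cmod (ws!m $ (i*d+r)))\<^sup>2)) \<le> (\<Sum>a<min k d. nu i!a)"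
    if i: "i < d" and k: "k \<le> n" for i k
    using block_bound(1)[of d ws mu J i "D i" "E i" "nu i" k] onJ lenJ expJ mnn i Dc Didx[OF i] E k
    unfolding nu_def n_def mu_def by auto
  have nunn: "0 \<le> nu i!a" if i: "i < d" and a: "a < d" for i a
    using block_bound(2)[of d ws mu J i "D i" "E i" "nu i"] onJ lenJ expJ mnn i Dc Didx[OF i] E a
    unfolding nu_def n_def mu_def by auto
  have norm1: "(\<Sum>i<d. \<Sum>r<d. (cmod (ws!m $ (i*d+r)))\<^sup>2) = 1" if m: "m < n" for m
  proof -
    have h1: "(\<Sum>i<d. \<Sum>r<d. (cmod (ws!m $ (i*d+r)))\<^sup>2) = (\<Sum>p<n. (cmod (ws!m $ p))\<^sup>2)"
      unfolding n_def by (rule sum_blocks)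
    have h2: "complex_of_real (\<Sum>p<n. (cmod (ws!m $ p))\<^sup>2) = ws!m \<bullet>c ws!m"
      unfolding cinner_sum[of "ws!m" n, OF carrier_vecD[OF carw[OF m]]] of_real_sum by (simp only: zcnj)
    have h3: "ws!m \<bullet>c ws!m = 1" using orthw[OF m m] by simp
    have "complex_of_real (\<Sum>p<n. (cmod (ws!m $ p))\<^sup>2) = 1" unfolding h2 h3 ..
    hence "(\<Sum>p<n. (cmod (ws!m $ p))\<^sup>2) = 1" by (simp only: of_real_eq_1_iff)
    thus ?thesis unfolding h1 .
  qed
  define f where "f k = (if k < d then (1 / real d) * (\<Sum>i<d. nu i ! k) else 0)" for k
  define x where "x = map f [0..<n]"
  have xeq: "map (\<lambda>k. if k < d then (1 / real d) * (\<Sum>i<d. eigvals (D i) ! k) else 0) [0..<d * d] = x"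
    unfolding x_def f_def nu_def n_def ..
  have lenx: "length x = n" by (simp add: x_def)
  have sortnu: "nu i ! b \<le> nu i ! a" if i: "i < d" and ab: "a < b" and b: "b < d" for i a b
  proof -
    have "sorted_wrt (\<ge>) (nu i)" "length (nu i) = d" using E i by (auto simp: nu_def)
    thus ?thesis using ab b by (auto simp: sorted_wrt_iff_nth_less)
  qed
  have f0: "0 \<le> f a" for a
  proof (cases "a < d")
    case True
    have "0 \<le> (\<Sum>i<d. nu i ! a)" by (rule sum_nonneg, insert nunn True, auto)
    thus ?thesis unfolding f_def using True by simp
  qed (simp add: f_def)
  have sortx: "sorted_wrt (\<ge>) x"
    unfolding sorted_wrt_iff_nth_less
  proof (intro allI impI)
    fix a b assume ab: "a < b" and b: "b < length x"
    have b': "b < n" using b lenx by simp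
    have "f b \<le> f a"
    proof (cases "b < d")
      case True
      have "(\<Sum>i<d. nu i ! b) \<le> (\<Sum>i<d. nu i ! a)" by (rule sum_mono, rule sortnu, insert ab True, auto)
      thus ?thesis using True ab unfolding f_def by (simp add: divide_right_mono)
    next
      case False thus ?thesis using f0[of a] unfolding f_def by simp
    qed
    thus "x ! b \<le> x ! a" using ab b' by (simp add: x_def)
  qed
  have main: "(\<Sum>m<k. mu!m) \<le> (\<Sum>a<k. f a)" if k: "k \<le> n" for k
  proof -
    have "(\<Sum>m<k. mu!m) = (\<Sum>m<k. mu!m * (\<Sum>i<d. \<Sum>r<d. (cmod (ws!m $ (i*d+r)))\<^sup>2))"
      by (rule sum.cong, simp, insert k, simp add: norm1)
    also have "\<dots> = (\<Sum>m<k. \<Sum>i<d. mu!m * (\<Sum>r<d. (cmod (ws!m $ (i*d+r)))\<^sup>2))"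
      by (simp only: sum_distrib_left)
    also have "\<dots> = (\<Sum>i<d. \<Sum>m<k. mu!m * (\<Sum>r<d. (cmod (ws!m $ (i*d+r)))\<^sup>2))"
      by (rule sum.swap)
    also have "\<dots> = (\<Sum>i<d. (1 / real d) * (\<Sum>m<k. real d * mu!m * (\<Sum>r<d. (cmod (ws!m $ (i*d+r)))\<^sup>2)))"
      by (rule sum.cong, simp, simp only: sum_distrib_left, rule sum.cong, simp, insert d1, simp)
    also have "\<dots> \<le> (\<Sum>i<d. (1 / real d) * (\<Sum>a<min k d. nu i ! a))"
      by (rule sum_mono, rule mult_left_mono, rule PB, insert k, auto)
    also have "\<dots> = (\<Sum>i<d. \<Sum>a<min k d. (1 / real d) * nu i ! a)"
      by (simp only: sum_distrib_left)
    also have "\<dots> = (\<Sum>a<min k d. \<Sum>i<d. (1 / real d) * nu i ! a)"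
      by (rule sum.swap)
    also have "\<dots> = (\<Sum>a<min k d. f a)"
      by (rule sum.cong, simp, simp add: f_def sum_distrib_left)
    also have "\<dots> = (\<Sum>a<k. f a)"
    proof (cases "k \<le> d")
      case True thus ?thesis by simp
    next
      case False
      hence "(\<Sum>a<k. f a) = (\<Sum>a<d. f a) + (\<Sum>a\<in>{d..<k}. f a)" by (intro sum_split_at, simp)
      also have "(\<Sum>a\<in>{d..<k}. f a) = 0" by (rule sum.neutral, simp add: f_def)
      finally show ?thesis using False by simp
    qed
    finally show ?thesis .
  qed
  show ?thesis unfolding xeq majorizes_def
  proof (intro conjI ballI)
    show "length x = length (eigvals J)" using lenx lenJ by simp
    fix k assume "k \<in> {1..length x}"
    hence k: "k \<le> n" using lenx by simp
    have "sum_list (take k (rev (sort (eigvals J)))) = (\<Sum>m<k. mu!m)"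
      unfolding rev_sort_id[OF sortJ] mu_def by (rule sum_list_take, insert k lenJ, simp)
    also have "\<dots> \<le> (\<Sum>a<k. f a)" by (rule main[OF k])
    also have "\<dots> = sum_list (take k (rev (sort x)))"
      unfolding rev_sort_id[OF sortx] using k lenx by (simp add: sum_list_take x_def)
    finally show "sum_list (take k (rev (sort (eigvals J)))) \<le> sum_list (take k (rev (sort x)))" .
  qed
qed

end
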